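(* Let $p\ge2$. Let $(u_n)\subset L^p(\mathbb{R}^2)$ with $u_n\to u$ a.e. on $\mathbb{R}^2$, where $u\in L^p(\mathbb{R}^2)\setminus\{0\}$. Let $(v_n)$ be bounded in $L^p(\mathbb{R}^2)$ with $\sup_n B_1(|u_n|^p,|v_n|^p)<\infty$. Then there exist $n_0$ and $C>0$ such that $\|v_n\|_*\le C$ for all $n\ge n_0$. Moreover, if $B_1(|u_n|^p,|v_n|^p)\to0$ and $\|v_n\|_{L^p}\to0$, then $\|v_n\|_*\to0$.
   Context: $B_1(f,g):=\int_{\mathbb{R}^2}\int_{\mathbb{R}^2}\log(1+|x-y|)f(x)g(y)\,dx\,dy$ (for nonnegative $f,g$ this is in $[0,\infty]$). $\|v\|_*:=\big(\int_{\mathbb{R}^2}\log(1+|x|)|v|^p\,dx\big)^{1/p}$. *)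

theory Defs
  imports "HOL-Analysis.Analysis"
begin

text \<open>Functions on R^2 are modelled as maps real^2 to complex (this covers real-valued
  functions as a special case). Lebesgue measure on R^2 is lebesgue.\<close>

definition in_Lp :: "real \<Rightarrow> (real^2 \<Rightarrow> complex) \<Rightarrow> bool" where
  "in_Lp p f \<longleftrightarrow> f \<in> borel_measurable lebesgue \<and>
     integrable lebesgue (\<lambda>x. norm (f x) powr p)"

definition Lp_norm :: "real \<Rightarrow> (real^2 \<Rightarrow> complex) \<Rightarrow> real" where
  "Lp_norm p f = (integral\<^sup>L lebesgue (\<lambda>x. norm (f x) powr p)) powr (1 / p)"

definition B1 :: "(real^2 \<Rightarrow> real) \<Rightarrow> (real^2 \<Rightarrow> real) \<Rightarrow> ennreal" where
  "B1 f g = (\<integral>\<^sup>+ x. (\<integral>\<^sup>+ y. ennreal (ln (1 + dist x y) * f x * g y) \<partial>lebesgue) \<partial>lebesgue)"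

definition star_int :: "real \<Rightarrow> (real^2 \<Rightarrow> complex) \<Rightarrow> ennreal" where
  "star_int p v = (\<integral>\<^sup>+ x. ennreal (ln (1 + norm x) * norm (v x) powr p) \<partial>lebesgue)"

definition star_norm :: "real \<Rightarrow> (real^2 \<Rightarrow> complex) \<Rightarrow> ennreal" where
  "star_norm p v = (if star_int p v = top then top
                    else ennreal ((enn2real (star_int p v)) powr (1 / p)))"

end

theory Submission
  imports Defs
begin


lemma ln_tri:
  fixes x y :: "real^2"
  assumes "norm x \<le> R"
  shows "ln (1 + norm y) \<le> ln (1 + dist x y) + ln (1 + R)"
proof -
  have "norm y \<le> dist x y + norm x"
    by (metis dist_norm norm_minus_commute norm_triangle_sub add.commute)
  have R0: "R \<ge> 0" using assms norm_ge_zero order_trans by blast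
  have e: "(1 + dist x y) * (1 + R) = 1 + dist x y + R + dist x y * R" by (simp add: algebra_simps)
  have "dist x y * R \<ge> 0" using R0 by simp
  hence "1 + norm y \<le> (1 + dist x y) * (1 + R)"
    using assms \<open>norm y \<le> dist x y + norm x\<close> unfolding e by linarith
  hence "ln (1 + norm y) \<le> ln ((1 + dist x y) * (1 + R))"
    using R0 by (subst ln_le_cancel_iff) (auto intro!: add_pos_nonneg mult_pos_pos)
  also have "\<dots> = ln (1 + dist x y) + ln (1 + R)"
    using R0 by (intro ln_mult_pos) (auto intro!: add_pos_nonneg)
  finally show ?thesis .
qed

lemma key:
  fixes f g :: "real^2 \<Rightarrow> real"
  assumes A: "A \<in> sets lebesgue" "A \<subseteq> cball 0 R" "emeasure lebesgue A = ennreal a" "a > 0"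
    and c: "c > 0" "\<And>x. x \<in> A \<Longrightarrow> f x \<ge> c"
    and g: "\<And>y. g y \<ge> 0" "g \<in> borel_measurable lebesgue"
    and b: "B1 f g = ennreal b" "b \<ge> 0"
    and q: "(\<integral>\<^sup>+y. ennreal (g y) \<partial>lebesgue) = ennreal q" "q \<ge> 0"
    and R: "R \<ge> 0"
  shows "(\<integral>\<^sup>+y. ennreal (ln (1 + norm y) * g y) \<partial>lebesgue) \<le> ennreal (b/(a*c) + ln (1+R) * q)"
proof -
  define S where "S = (\<integral>\<^sup>+y. ennreal (ln (1 + norm y) * g y) \<partial>lebesgue)"
  define inner where "inner x = (\<integral>\<^sup>+ y. ennreal (ln (1 + dist x y) * f x * g y) \<partial>lebesgue)" for x
  define K where "K = ennreal (c * ln (1+R) * q)"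
  have lnR: "ln (1+R) \<ge> 0" using R by simp
  have pt: "ennreal c * S \<le> inner x + K" if x: "x \<in> A" for x
  proof -
    have nx: "norm x \<le> R" using x A(2) by auto
    have "(\<lambda>y. ln (1 + dist x y)) \<in> borel_measurable lborel" by measurable
    hence [measurable]: "(\<lambda>y. ln (1 + dist x y)) \<in> borel_measurable lebesgue"
      by (simp add: measurable_completion)
    have [measurable]: "g \<in> borel_measurable lebesgue" by (rule g(2))
    have m1[measurable]: "(\<lambda>y. ennreal (ln (1 + dist x y) * g y)) \<in> borel_measurable lebesgue"
      by measurable
    have "S \<le> (\<integral>\<^sup>+y. ennreal (ln (1 + dist x y) * g y) + ennreal (ln (1+R)) * ennreal (g y) \<partial>lebesgue)"
      unfolding S_def
    proof (rule nn_integral_mono)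
      fix y
      have "ln (1 + norm y) * g y \<le> ln (1 + dist x y) * g y + ln (1+R) * g y"
        using ln_tri[OF nx, of y] g(1)[of y] by (metis distrib_right mult_right_mono)
      moreover have "ennreal (ln (1 + dist x y) * g y) + ennreal (ln (1+R)) * ennreal (g y)
          = ennreal (ln (1 + dist x y) * g y + ln (1+R) * g y)"
        using g(1)[of y] lnR by (subst ennreal_plus) (auto simp: ennreal_mult)
      ultimately show "ennreal (ln (1 + norm y) * g y) \<le> ennreal (ln (1 + dist x y) * g y) + ennreal (ln (1+R)) * ennreal (g y)"
        by (simp add: ennreal_leI)
    qed
    also have "\<dots> = (\<integral>\<^sup>+y. ennreal (ln (1 + dist x y) * g y) \<partial>lebesgue) + ennreal (ln (1+R)) * ennreal q"
      using g(2) q(1) by (simp add: nn_integral_add nn_integral_cmult)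
    finally have S1: "S \<le> (\<integral>\<^sup>+y. ennreal (ln (1 + dist x y) * g y) \<partial>lebesgue) + ennreal (ln (1+R)) * ennreal q" .
    have "ennreal c * (\<integral>\<^sup>+y. ennreal (ln (1 + dist x y) * g y) \<partial>lebesgue)
        = (\<integral>\<^sup>+y. ennreal c * ennreal (ln (1 + dist x y) * g y) \<partial>lebesgue)"
      by (simp add: nn_integral_cmult)
    also have "\<dots> \<le> inner x"
      unfolding inner_def
    proof (rule nn_integral_mono)
      fix y
      have l0: "ln (1 + dist x y) \<ge> 0" by simp
      have "c * (ln (1 + dist x y) * g y) \<le> ln (1 + dist x y) * f x * g y"
        using c(2)[OF x] l0 g(1)[of y]
        by (simp add: mult_right_mono mult.commute mult.left_commute mult_left_mono)
      thus "ennreal c * ennreal (ln (1 + dist x y) * g y) \<le> ennreal (ln (1 + dist x y) * f x * g y)"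
        using c(1) by (simp add: ennreal_mult'[symmetric] ennreal_leI)
    qed
    finally have I1: "ennreal c * (\<integral>\<^sup>+y. ennreal (ln (1 + dist x y) * g y) \<partial>lebesgue) \<le> inner x" .
    have "ennreal c * S \<le> ennreal c * ((\<integral>\<^sup>+y. ennreal (ln (1 + dist x y) * g y) \<partial>lebesgue) + ennreal (ln (1+R)) * ennreal q)"
      using S1 by (rule mult_left_mono) simp
    also have "\<dots> = ennreal c * (\<integral>\<^sup>+y. ennreal (ln (1 + dist x y) * g y) \<partial>lebesgue) + K"
      unfolding K_def using c(1) lnR q(2)
      by (simp add: distrib_left ennreal_mult[symmetric] mult.assoc)
    also have "\<dots> \<le> inner x + K" using I1 by (simp add: add_right_mono)
    finally show ?thesis .
  qed
  have "(ennreal c * S - K) * emeasure lebesgue A = (\<integral>\<^sup>+x. (ennreal c * S - K) * indicator A x \<partial>lebesgue)"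
    using A(1) by (simp add: nn_integral_cmult_indicator)
  also have "\<dots> \<le> (\<integral>\<^sup>+x. inner x \<partial>lebesgue)"
  proof (rule nn_integral_mono)
    fix x
    show "(ennreal c * S - K) * indicator A x \<le> inner x"
    proof (cases "x \<in> A")
      case True
      have "ennreal c * S - K \<le> inner x"
        using pt[OF True] unfolding K_def by (simp add: ennreal_minus_le_iff add.commute)
      thus ?thesis using True by simp
    qed simp
  qed
  also have "\<dots> = ennreal b" using b(1) unfolding B1_def inner_def by simp
  finally have D: "(ennreal c * S - K) * ennreal a \<le> ennreal b" using A(3) by simp
  have "ennreal c * S - K \<le> ennreal (b / a)"
  proof (cases "ennreal c * S - K")
    case (real d)
    then have "ennreal (d * a) \<le> ennreal b" using D A(4) by (simp add: ennreal_mult)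
    then have "d * a \<le> b" using b(2) by (simp add: ennreal_le_iff)
    then show ?thesis using real A(4) by (simp add: ennreal_leI pos_le_divide_eq)
  next
    case top
    then show ?thesis using D A(4) by (auto simp: ennreal_mult_top top_unique)
  qed
  hence "ennreal c * S \<le> ennreal (b / a) + K"
    by (simp add: ennreal_minus_le_iff K_def add.commute)
  also have "\<dots> = ennreal c * ennreal (b/(a*c) + ln (1+R) * q)"
    unfolding K_def using c(1) A(4) b(2) q(2) lnR
    by (simp add: ennreal_mult[symmetric] ennreal_plus[symmetric] distrib_left field_simps)
  finally have "ennreal c * S \<le> ennreal c * ennreal (b/(a*c) + ln (1+R) * q)" .
  thus ?thesis unfolding S_def using c(1)
    by (simp add: ennreal_mult_le_mult_iff)
qed



lemma star_bound:
  assumes p: "p > 0" and S: "star_int p v \<le> ennreal W" and W: "W \<ge> 0"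
  shows "star_norm p v \<le> ennreal (W powr (1/p))"
proof -
  have nt: "star_int p v \<noteq> top" using S by (auto simp: top_unique)
  then obtain s where s: "star_int p v = ennreal s" "s \<ge> 0" by (cases "star_int p v") auto
  have "s \<le> W" using S s W by simp
  hence "s powr (1/p) \<le> W powr (1/p)" using s(2) p by (intro powr_mono2) auto
  thus ?thesis using nt s unfolding star_norm_def by (simp add: ennreal_leI)
qed

lemma Lp_facts:
  assumes "in_Lp p v" "p > 0"
  shows "(\<integral>\<^sup>+ y. ennreal (norm (v y) powr p) \<partial>lebesgue) = ennreal (integral\<^sup>L lebesgue (\<lambda>y. norm (v y) powr p))"
    and "integral\<^sup>L lebesgue (\<lambda>y. norm (v y) powr p) \<ge> 0"
    and "Lp_norm p v powr p = integral\<^sup>L lebesgue (\<lambda>y. norm (v y) powr p)"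
    and "Lp_norm p v \<ge> 0"
proof -
  have int: "integrable lebesgue (\<lambda>y. norm (v y) powr p)" using assms(1) by (simp add: in_Lp_def)
  show "(\<integral>\<^sup>+ y. ennreal (norm (v y) powr p) \<partial>lebesgue) = ennreal (integral\<^sup>L lebesgue (\<lambda>y. norm (v y) powr p))"
    using int by (intro nn_integral_eq_integral) auto
  show i0: "integral\<^sup>L lebesgue (\<lambda>y. norm (v y) powr p) \<ge> 0" by (intro integral_nonneg_AE) auto
  show "Lp_norm p v powr p = integral\<^sup>L lebesgue (\<lambda>y. norm (v y) powr p)"
    unfolding Lp_norm_def using assms(2) i0 by (simp add: powr_powr)
  show "Lp_norm p v \<ge> 0" unfolding Lp_norm_def by simp
qed

lemma point_lemma:
  fixes us :: "nat \<Rightarrow> real^2 \<Rightarrow> complex"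
  assumes conv: "(\<lambda>n. us n x) \<longlonglongrightarrow> u x"
    and notin: "\<And>N. x \<notin> {x. norm x \<le> real N \<and> (\<forall>n\<ge>N. 1 / real (Suc N) \<le> norm (us n x))}"
  shows "u x = 0"
proof (rule ccontr)
  assume nz: "u x \<noteq> 0"
  define e where "e = norm (u x) / 2"
  have e0: "e > 0" using nz by (simp add: e_def)
  obtain N1 where N1: "\<And>n. n \<ge> N1 \<Longrightarrow> dist (us n x) (u x) < e"
    using tendstoD[OF conv e0] unfolding eventually_sequentially by blast
  obtain N2 where N2: "inverse (real (Suc N2)) < e" using reals_Archimedean[OF e0] by blast
  define N where "N = max N1 (max N2 (nat \<lceil>norm x\<rceil>))"
  have "norm x \<le> real N" unfolding N_def by linarith
  moreover have "1 / real (Suc N) \<le> norm (us n x)" if "n \<ge> N" for n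
  proof -
    have "dist (us n x) (u x) < e" using N1 that unfolding N_def by simp
    moreover have "norm (u x) - norm (us n x) \<le> dist (us n x) (u x)"
      using norm_triangle_ineq2[of "u x" "us n x"] by (simp add: dist_commute dist_norm)
    ultimately have "norm (us n x) \<ge> e" unfolding e_def by linarith
    moreover have "1 / real (Suc N) \<le> inverse (real (Suc N2))"
      unfolding N_def by (simp add: divide_simps inverse_eq_divide)
    ultimately show ?thesis using N2 by linarith
  qed
  ultimately show False using notin[of N] by auto
qed

lemma E_meas:
  fixes us :: "nat \<Rightarrow> real^2 \<Rightarrow> complex"
  assumes [measurable]: "\<And>n. us n \<in> borel_measurable lebesgue"
  shows "{x. norm x \<le> real N \<and> (\<forall>n\<ge>N. 1 / real (Suc N) \<le> norm (us n x))} \<in> sets lebesgue"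
proof -
  have "(\<lambda>x::real^2. norm x) \<in> borel_measurable lborel" by measurable
  hence [measurable]: "(\<lambda>x::real^2. norm x) \<in> borel_measurable lebesgue"
    by (simp add: measurable_completion)
  have "cball (0::real^2) (real N) \<in> sets lebesgue" by (metis lmeasurable_cball fmeasurableD)
  moreover have "cball (0::real^2) (real N) = {x. norm x \<le> real N}" by (auto simp: dist_norm)
  ultimately have 1: "{x::real^2. norm x \<le> real N} \<in> sets lebesgue" by simp
  have 2: "{x. 1 / real (Suc N) \<le> norm (us n x)} \<in> sets lebesgue" for n
  proof -
    have "Measurable.pred lebesgue (\<lambda>x. 1 / real (Suc N) \<le> norm (us n x))" by measurable
    thus ?thesis by (simp add: pred_def)
  qed
  have "{x. norm x \<le> real N \<and> (\<forall>n\<ge>N. 1 / real (Suc N) \<le> norm (us n x))}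
     = {x. norm x \<le> real N} \<inter> (\<Inter>n\<in>{N..}. {x. 1 / real (Suc N) \<le> norm (us n x)})" by auto
  also have "\<dots> \<in> sets lebesgue" using 1 2 by (intro sets.Int sets.countable_INT') auto
  finally show ?thesis .
qed

theorem lemma3p2:
  fixes p :: real and u :: "real^2 \<Rightarrow> complex"
    and us vs :: "nat \<Rightarrow> real^2 \<Rightarrow> complex"
  assumes p: "p \<ge> 2"
    and us_Lp: "\<And>n. in_Lp p (us n)"
    and u_Lp: "in_Lp p u"
    and u_nz: "\<not> (AE x in lebesgue. u x = 0)"
    and ae_conv: "AE x in lebesgue. (\<lambda>n. us n x) \<longlonglongrightarrow> u x"
    and vs_Lp: "\<And>n. in_Lp p (vs n)"
    and vs_bdd: "\<exists>M. \<forall>n. Lp_norm p (vs n) \<le> M"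
    and B_bdd: "(SUP n. B1 (\<lambda>x. norm (us n x) powr p) (\<lambda>y. norm (vs n y) powr p)) < top"
  shows "(\<exists>n0 C. C > 0 \<and> (\<forall>n\<ge>n0. star_norm p (vs n) \<le> ennreal C))
       \<and> (((\<lambda>n. B1 (\<lambda>x. norm (us n x) powr p) (\<lambda>y. norm (vs n y) powr p)) \<longlonglongrightarrow> 0
            \<and> (\<lambda>n. Lp_norm p (vs n)) \<longlonglongrightarrow> 0)
          \<longrightarrow> (\<lambda>n. star_norm p (vs n)) \<longlonglongrightarrow> 0)"
proof -
  have p0: "p > 0" using p by simp
  have [measurable]: "us n \<in> borel_measurable lebesgue" for n using us_Lp[of n] by (simp add: in_Lp_def)
  have [measurable]: "vs n \<in> borel_measurable lebesgue" for n using vs_Lp[of n] by (simp add: in_Lp_def)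
  define E where "E N = {x. norm x \<le> real N \<and> (\<forall>n\<ge>N. 1 / real (Suc N) \<le> norm (us n x))}" for N
  have "(\<lambda>x::real^2. norm x) \<in> borel_measurable lborel" by measurable
  hence [measurable]: "(\<lambda>x::real^2. norm x) \<in> borel_measurable lebesgue"
    by (simp add: measurable_completion)
  have Emeas: "E N \<in> sets lebesgue" for N unfolding E_def by (rule E_meas) measurable
  have Ebd: "E N \<subseteq> cball 0 (real N)" for N unfolding E_def by auto
  have "\<exists>N. emeasure lebesgue (E N) \<noteq> 0"
  proof (rule ccontr)
    assume "\<not> ?thesis"
    hence "E N \<in> null_sets lebesgue" for N using Emeas by auto
    hence "AE x in lebesgue. x \<notin> E N" for N by (rule AE_not_in)
    hence "AE x in lebesgue. \<forall>N. x \<notin> E N" by (simp add: AE_all_countable)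
    hence "AE x in lebesgue. u x = 0" using ae_conv
      by eventually_elim (rule point_lemma, auto simp: E_def)
    thus False using u_nz by simp
  qed
  then obtain N where EN0: "emeasure lebesgue (E N) \<noteq> 0" by blast
  have "E N \<in> lmeasurable"
    using Emeas bounded_subset[OF bounded_cball Ebd[of N]] by (intro bounded_set_imp_lmeasurable)
  hence Efin: "emeasure lebesgue (E N) \<noteq> top" by (rule fmeasurableD2)
  define a where "a = measure lebesgue (E N)"
  have Ea: "emeasure lebesgue (E N) = ennreal a" unfolding a_def using Efin
    by (intro emeasure_eq_ennreal_measure)
  have "a \<noteq> 0" using EN0 Ea by auto
  moreover have "a \<ge> 0" unfolding a_def by (rule measure_nonneg)
  ultimately have a0: "a > 0" by simp
  define c where "c = (1 / real (Suc N)) powr p"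
  have c0: "c > 0" unfolding c_def by simp
  define Bn where "Bn n = B1 (\<lambda>x. norm (us n x) powr p) (\<lambda>y. norm (vs n y) powr p)" for n
  define b where "b n = enn2real (Bn n)" for n
  define q where "q n = integral\<^sup>L lebesgue (\<lambda>y. norm (vs n y) powr p)" for n
  define W where "W n = b n / (a * c) + ln (1 + real N) * q n" for n
  have Bn_le: "Bn n \<le> (SUP n. Bn n)" for n by (rule SUP_upper) simp
  have Bn_fin: "Bn n \<noteq> top" for n using Bn_le[of n] B_bdd unfolding Bn_def[abs_def]
    by (auto simp: top_unique)
  have Bnb: "Bn n = ennreal (b n)" for n unfolding b_def using Bn_fin[of n] by (simp add: less_top)
  have b0: "b n \<ge> 0" for n unfolding b_def by simp
  have q0: "q n \<ge> 0" for n unfolding q_def using Lp_facts(2)[OF vs_Lp p0] .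
  have W0: "W n \<ge> 0" for n unfolding W_def using a0 c0 b0 q0 by simp
  have main: "star_int p (vs n) \<le> ennreal (W n)" if "n \<ge> N" for n
    unfolding star_int_def W_def
  proof (rule key[OF Emeas Ebd Ea a0 c0])
    show "c \<le> norm (us n x) powr p" if "x \<in> E N" for x
      unfolding c_def using that \<open>n \<ge> N\<close> p0 unfolding E_def by (auto intro!: powr_mono2)
    show "0 \<le> norm (vs n y) powr p" for y by simp
    show "(\<lambda>y. norm (vs n y) powr p) \<in> borel_measurable lebesgue" by measurable
    show "B1 (\<lambda>x. norm (us n x) powr p) (\<lambda>y. norm (vs n y) powr p) = ennreal (b n)"
      using Bnb unfolding Bn_def .
    show "(\<integral>\<^sup>+y. ennreal (norm (vs n y) powr p) \<partial>lebesgue) = ennreal (q n)"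
      unfolding q_def by (rule Lp_facts(1)[OF vs_Lp p0])
  qed (auto simp: b0 q0)
  have SN: "star_norm p (vs n) \<le> ennreal (W n powr (1/p))" if "n \<ge> N" for n
    by (rule star_bound[OF p0 main[OF that] W0])
  show ?thesis
  proof
    obtain M where M: "\<And>n. Lp_norm p (vs n) \<le> M" using vs_bdd by blast
    have M0: "M \<ge> 0" using M[of 0] Lp_facts(4)[OF vs_Lp p0, of 0] by linarith
    define Bs where "Bs = enn2real (SUP n. Bn n)"
    define W' where "W' = Bs / (a * c) + ln (1 + real N) * M powr p"
    have "W n \<le> W'" for n
    proof -
      have "b n \<le> Bs" unfolding b_def Bs_def using Bn_le[of n] B_bdd unfolding Bn_def[abs_def]
        by (intro enn2real_mono) auto
      hence 1: "b n / (a * c) \<le> Bs / (a * c)" using a0 c0 by (simp add: divide_right_mono)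
      have "q n = Lp_norm p (vs n) powr p" unfolding q_def using Lp_facts(3)[OF vs_Lp p0] by simp
      also have "\<dots> \<le> M powr p" using M[of n] Lp_facts(4)[OF vs_Lp p0, of n] p0 by (intro powr_mono2) auto
      finally have "ln (1 + real N) * q n \<le> ln (1 + real N) * M powr p" by (intro mult_left_mono) auto
      with 1 show ?thesis unfolding W_def W'_def by linarith
    qed
    hence "W n powr (1/p) \<le> W' powr (1/p)" for n using W0 p0 by (intro powr_mono2) auto
    hence "star_norm p (vs n) \<le> ennreal (max 1 (W' powr (1/p)))" if "n \<ge> N" for n
      using SN[OF that] by (meson ennreal_leI max.cobounded2 order_trans)
    thus "\<exists>n0 C. C > 0 \<and> (\<forall>n\<ge>n0. star_norm p (vs n) \<le> ennreal C)"
      by (intro exI[of _ N] exI[of _ "max 1 (W' powr (1/p))"]) auto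
  next
    show "((\<lambda>n. B1 (\<lambda>x. norm (us n x) powr p) (\<lambda>y. norm (vs n y) powr p)) \<longlonglongrightarrow> 0
            \<and> (\<lambda>n. Lp_norm p (vs n)) \<longlonglongrightarrow> 0)
          \<longrightarrow> (\<lambda>n. star_norm p (vs n)) \<longlonglongrightarrow> 0"
    proof
      assume A: "((\<lambda>n. B1 (\<lambda>x. norm (us n x) powr p) (\<lambda>y. norm (vs n y) powr p)) \<longlonglongrightarrow> 0
            \<and> (\<lambda>n. Lp_norm p (vs n)) \<longlonglongrightarrow> 0)"
      have "(Bn \<longlonglongrightarrow> ennreal 0)" using A unfolding Bn_def[abs_def] by simp
      hence bt: "b \<longlonglongrightarrow> 0" unfolding b_def[abs_def] by (rule tendsto_enn2real) simp
      have "(\<lambda>n. Lp_norm p (vs n) powr p) \<longlonglongrightarrow> 0"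
        using A p0 Lp_facts(4)[OF vs_Lp p0] by (intro tendsto_zero_powrI) auto
      hence qt: "q \<longlonglongrightarrow> 0" unfolding q_def[abs_def] using Lp_facts(3)[OF vs_Lp p0] by simp
      have "W \<longlonglongrightarrow> 0 / (a * c) + ln (1 + real N) * 0" unfolding W_def[abs_def]
        by (intro tendsto_intros bt qt) (use a0 c0 in auto)
      hence "W \<longlonglongrightarrow> 0" by simp
      hence "(\<lambda>n. W n powr (1/p)) \<longlonglongrightarrow> 0" using W0 p0 by (intro tendsto_zero_powrI[where b="1/p"]) auto
      hence "(\<lambda>n. ennreal (W n powr (1/p))) \<longlonglongrightarrow> ennreal 0" by (intro tendsto_ennrealI)
      hence U: "(\<lambda>n. ennreal (W n powr (1/p))) \<longlonglongrightarrow> 0" by simp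
      show "(\<lambda>n. star_norm p (vs n)) \<longlonglongrightarrow> 0"
        by (rule tendsto_sandwich[OF _ _ tendsto_const U])
           (auto simp: eventually_sequentially intro!: exI[of _ N] SN)
    qed
  qed
qed

end
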